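(* Let $f:\mathbb{R}^n\to\mathbb{R}$ be twice continuously differentiable, $x_0\in\mathbb{R}^n$, $S_f=\{x: f(x)\le f(x_0)\}$. Assume $\|\nabla f(x)-\nabla f(y)\|\le L_C\|x-y\|$ for all $x,y\in S_f$, and that there are constants $M\ge m>0$ with $M\|z\|^2\ge z^{T}\nabla^2 f(x)z\ge m\|z\|^2$ for all $x\in S_f$, $z\in\mathbb{R}^n$. Let $\{x_k\}$ and the time-stepping sizes $\{\Delta t_k\}$ be generated by the Eptctr algorithm described in the context. Then there exists a positive constant $\delta_{\Delta t}$ such that $\Delta t_k \ge \gamma_2\,\delta_{\Delta t}$ for all $k=1,2,\dots$.
   Context: Eptctr algorithm (explicit pseudo-transient continuation with trust-region updating and switching preconditioning). Parameters: $\eta_a=10^{-6}$, $\eta_1=0.25$, $\gamma_1=2$, $\eta_2=0.75$, $\gamma_2=0.5$, $\theta=10^{-6}$, initial $\Delta t_0=10^{-2}$, counter $K_{bad}=0$, $y_{-1}=s_{-1}=0$. Notation: $g_k=\nabla f(x_k)$, $B_k=\nabla^2 f(x_k)$. Initially $s_0^N$ solves $B_0 s_0^N=-g_0$. At iteration $k$: if the previous trial step was accepted (or $k=0$), compute the direction $s_k^N$ as follows: if $|s_{k-1}^{T}y_{k-1}|>\theta\|s_{k-1}\|^2$ and $K_{bad}<5$, set $s_k^N=-H_kg_k$ with $H_k = I - \frac{y_{k-1}s_{k-1}^{T}+s_{k-1}y_{k-1}^{T}}{y_{k-1}^{T}s_{k-1}} + 2\frac{\|y_{k-1}\|^2}{(y_{k-1}^{T}s_{k-1})^2}s_{k-1}s_{k-1}^{T}$;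 otherwise solve $B_k s_k^N=-g_k$. If the previous trial step was rejected, the previous direction is reused. Set $s_k=\frac{\Delta t_k}{1+\Delta t_k}s_k^N$ and compute $\rho_k=\frac{f(x_k)-f(x_k+s_k)}{m_k(0)-m_k(s_k)}$ with $m_k(s)=\frac{1+0.5\Delta t_k}{1+\Delta t_k}g_k^{T}s$. If $\rho_k\le\eta_a$ the step is rejected ($x_{k+1}=x_k$, and the pair $(s,y)$ used for $H$ is not changed); otherwise it is accepted: $x_{k+1}=x_k+s_k$, $y_k=g_{k+1}-g_k$, $s_k=x_{k+1}-x_k$. Time step update: if $|1-\rho_k|\ge\eta_2$ then $K_{bad}\leftarrow K_{bad}+1$ and $\Delta t_{k+1}=\gamma_2\Delta t_k$; else if $|1-\rho_k|\ge\eta_1$ then $\Delta t_{k+1}=\Delta t_k$; else $\Delta t_{k+1}=\gamma_1\Delta t_k$. The algorithm is considered as generating an infinite sequence (the stopping test $\|g_k\|\le\epsilon$ is not triggered). *)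

theory Defs
  imports "HOL-Analysis.Analysis"
begin

definition eta_a :: real where "eta_a = 1 / 10^6"
definition eta_1 :: real where "eta_1 = 1/4"
definition gamma_1 :: real where "gamma_1 = 2"
definition eta_2 :: real where "eta_2 = 3/4"
definition gamma_2 :: real where "gamma_2 = 1/2"
definition theta_par :: real where "theta_par = 1 / 10^6"
definition dt_init :: real where "dt_init = 1 / 10^2"

text \<open>State of the algorithm at iteration k: iterate x_k, time step dt_k, counter K_bad,
  the direction s_{k-1}^N used at the previous iteration, the pair (s,y) used to build H,
  and whether the previous trial step was accepted (True initially, i.e. k = 0).\<close>
record ('n::finite) ept_state =
  xk :: "real^'n"
  dtk :: real
  kbad :: nat
  sdir :: "real^'n"
  spair :: "real^'n"
  ypair :: "real^'n"
  prev_acc :: bool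

definition outer_prod :: "real^'n::finite \<Rightarrow> real^'n \<Rightarrow> real^'n^'n" where
  "outer_prod a b = (\<chi> i j. a $ i * b $ j)"

definition H_mat :: "real^'n::finite \<Rightarrow> real^'n \<Rightarrow> real^'n^'n" where
  "H_mat s y = mat 1
     - (1 / (y \<bullet> s)) *\<^sub>R (outer_prod y s + outer_prod s y)
     + (2 * (norm y)^2 / (y \<bullet> s)^2) *\<^sub>R outer_prod s s"

text \<open>New search direction s_k^N (computed when the previous step was accepted or k = 0).
  g is the gradient, B the Hessian.\<close>
definition new_dir ::
  "(real^'n::finite \<Rightarrow> real^'n) \<Rightarrow> (real^'n \<Rightarrow> real^'n^'n) \<Rightarrow> ('n, 'z) ept_state_scheme \<Rightarrow> real^'n" where
  "new_dir g B st =
     (if \<bar>spair st \<bullet> ypair st\<bar> > theta_par * (norm (spair st))^2 \<and> kbad st < 5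
      then - (H_mat (spair st) (ypair st) *v g (xk st))
      else matrix_inv (B (xk st)) *v (- g (xk st)))"

definition ept_step ::
  "(real^'n::finite \<Rightarrow> real) \<Rightarrow> (real^'n \<Rightarrow> real^'n) \<Rightarrow> (real^'n \<Rightarrow> real^'n^'n)
    \<Rightarrow> 'n ept_state \<Rightarrow> 'n ept_state" where
  "ept_step f g B st =
    (let x = xk st; dt = dtk st;
         d = (if prev_acc st then new_dir g B st else sdir st);
         s = (dt / (1 + dt)) *\<^sub>R d;
         mdec = - ((1 + dt / 2) / (1 + dt)) * (g x \<bullet> s);
         rho = (f x - f (x + s)) / mdec;
         acc = (rho > eta_a);
         x' = (if acc then x + s else x);
         sp' = (if acc then x' - x else spair st);
         yp' = (if acc then g x' - g x else ypair st);
         kb' = (if \<bar>1 - rho\<bar> \<ge> eta_2 then Suc (kbad st) else kbad st);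
         dt' = (if \<bar>1 - rho\<bar> \<ge> eta_2 then gamma_2 * dt
                else if \<bar>1 - rho\<bar> \<ge> eta_1 then dt else gamma_1 * dt)
     in \<lparr> xk = x', dtk = dt', kbad = kb', sdir = d, spair = sp', ypair = yp',
          prev_acc = acc \<rparr>)"

text \<open>Initial state: x_0, dt_0 = 10^-2, K_bad = 0, s_{-1} = y_{-1} = 0; k = 0 counts as accepted,
  so s_0^N is the Newton direction (the H-test fails for s = 0).\<close>
definition ept_init :: "real^'n::finite \<Rightarrow> 'n ept_state" where
  "ept_init x0 = \<lparr> xk = x0, dtk = dt_init, kbad = 0, sdir = 0, spair = 0, ypair = 0,
                   prev_acc = True \<rparr>"

definition ept_seq ::
  "(real^'n::finite \<Rightarrow> real) \<Rightarrow> (real^'n \<Rightarrow> real^'n) \<Rightarrow> (real^'n \<Rightarrow> real^'n^'n)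
    \<Rightarrow> real^'n \<Rightarrow> nat \<Rightarrow> 'n ept_state" where
  "ept_seq f g B x0 k = (ept_step f g B ^^ k) (ept_init x0)"

end

theory Submission
  imports Defs
begin

lemma dir_bound_neg:
  fixes f :: "real^'n::finite \<Rightarrow> real" and g :: "real^'n \<Rightarrow> real^'n" and B :: "real^'n \<Rightarrow> real^'n^'n"
  assumes grad: "\<And>x. (f has_derivative (\<lambda>h. g x \<bullet> h)) (at x)"
    and hess: "\<And>x. (g has_derivative (\<lambda>h. B x *v h)) (at x)"
    and lipL: "\<And>y. f y \<le> c0 \<Longrightarrow> norm (g y - g x) \<le> L * norm (y - x)"
    and fx: "f x \<le> c0" and gh: "g x \<bullet> h < 0"
  shows "norm (B x *v h) \<le> L * norm h"
proof -
  have hnz: "h \<noteq> 0" using gh by auto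
  hence hpos: "norm h > 0" by simp
  have "norm (B x *v h) \<le> L * norm h + e" if e: "e > 0" for e
  proof -
    define e1 where "e1 = - (g x \<bullet> h) / (2 * norm h)"
    have e1: "e1 > 0" using gh hpos by (simp add: e1_def divide_neg_pos)
    obtain d1 where d1: "d1 > 0" and D1: "\<And>y. norm (y - x) < d1 \<Longrightarrow>
        norm (f y - f x - g x \<bullet> (y - x)) \<le> e1 * norm (y - x)"
      using grad[of x, unfolded has_derivative_at_alt] e1 by blast
    define e2 where "e2 = e / norm h"
    have e2: "e2 > 0" using e hpos by (simp add: e2_def)
    obtain d2 where d2: "d2 > 0" and D2: "\<And>y. norm (y - x) < d2 \<Longrightarrow>
        norm (g y - g x - B x *v (y - x)) \<le> e2 * norm (y - x)"
      using hess[of x, unfolded has_derivative_at_alt] e2 by blast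
    define t where "t = min d1 d2 / (2 * norm h)"
    have t: "t > 0" using d1 d2 hpos by (simp add: t_def)
    have nth: "norm (t *\<^sub>R h) = t * norm h" using t by simp
    have lt1: "t * norm h < d1" and lt2: "t * norm h < d2" using d1 d2 hpos
      by (auto simp: t_def)
    define y where "y = x + t *\<^sub>R h"
    have yx: "y - x = t *\<^sub>R h" by (simp add: y_def)
    have "norm (f y - f x - g x \<bullet> (y - x)) \<le> e1 * (t * norm h)"
      using D1[of y] lt1 yx nth t by simp
    hence "f y - f x - t * (g x \<bullet> h) \<le> e1 * (t * norm h)" using yx
      by (simp add: abs_le_iff)
    moreover have "e1 * (t * norm h) = - t * (g x \<bullet> h) / 2"
      using hpos by (simp add: e1_def field_simps)
    moreover have "t * (g x \<bullet> h) < 0" using t gh by (simp add: mult_pos_neg)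
    ultimately have "f y < f x" by linarith
    hence "f y \<le> c0" using fx by simp
    hence L1: "norm (g y - g x) \<le> L * (t * norm h)" using lipL[of y] yx nth t by simp
    have "norm (g y - g x - t *\<^sub>R (B x *v h)) \<le> e2 * (t * norm h)"
      using D2[of y] lt2 yx nth t by (simp add: scaleR_matrix_vector_assoc matrix_vector_mult_scaleR)
    hence "norm (t *\<^sub>R (B x *v h)) \<le> norm (g y - g x) + e2 * (t * norm h)"
      using norm_triangle_ineq2[of "t *\<^sub>R (B x *v h)" "g y - g x"] norm_minus_commute[of "g y - g x" "t *\<^sub>R (B x *v h)"]
      by linarith
    hence "t * norm (B x *v h) \<le> L * (t * norm h) + e2 * (t * norm h)" using L1 t by simp
    hence "t * norm (B x *v h) \<le> t * (L * norm h + e)"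
      using hpos by (simp add: e2_def field_simps)
    thus ?thesis using t by simp
  qed
  thus ?thesis by (rule field_le_epsilon)
qed

lemma mv_neg: "(A::real^'n::finite^'m::finite) *v (- v) = - (A *v v)"
  by (simp add: vec_eq_iff matrix_vector_mult_def sum_negf)

lemma mv_diff: "(A::real^'n::finite^'m::finite) *v (v - w) = A *v v - A *v w"
  by (simp add: matrix_vector_right_distrib[symmetric] vec_eq_iff matrix_vector_mult_def sum_subtractf algebra_simps)

lemma dir_bound:
  fixes f :: "real^'n::finite \<Rightarrow> real" and g :: "real^'n \<Rightarrow> real^'n" and B :: "real^'n \<Rightarrow> real^'n^'n"
  assumes grad: "\<And>x. (f has_derivative (\<lambda>h. g x \<bullet> h)) (at x)"
    and hess: "\<And>x. (g has_derivative (\<lambda>h. B x *v h)) (at x)"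
    and lipL: "\<And>y. f y \<le> c0 \<Longrightarrow> norm (g y - g x) \<le> L * norm (y - x)"
    and fx: "f x \<le> c0" and gnz: "g x \<noteq> 0" and L: "L \<ge> 0"
  shows "norm (B x *v h) \<le> L * norm h"
proof -
  note nb = dir_bound_neg[OF grad hess lipL fx]
  have gg: "norm (B x *v g x) \<le> L * norm (g x)"
    using nb[of "- g x"] gnz by (simp add: mv_neg)
  consider "g x \<bullet> h < 0" | "g x \<bullet> h > 0" | "g x \<bullet> h = 0" by linarith
  thus ?thesis
  proof cases
    case 1 thus ?thesis using nb by blast
  next
    case 2 thus ?thesis using nb[of "-h"] by (simp add: mv_neg)
  next
    case 3
    define K where "K = L * norm (g x) + norm (B x *v g x)"
    have K: "K \<ge> 0" using L by (simp add: K_def)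
    have P: "norm (B x *v h) \<le> L * norm h + e * K" if e: "e > 0" for e
    proof -
      have "g x \<bullet> (h - e *\<^sub>R g x) < 0" using 3 e gnz
        by (simp add: inner_diff_right)
      hence A: "norm (B x *v (h - e *\<^sub>R g x)) \<le> L * norm (h - e *\<^sub>R g x)" using nb by blast
      have "B x *v h = B x *v (h - e *\<^sub>R g x) + e *\<^sub>R (B x *v g x)"
        by (simp add: mv_diff matrix_vector_mult_scaleR)
      hence "norm (B x *v h) \<le> norm (B x *v (h - e *\<^sub>R g x)) + e * norm (B x *v g x)"
        using e by (metis norm_triangle_ineq norm_scaleR abs_of_pos)
      also have "\<dots> \<le> L * norm (h - e *\<^sub>R g x) + e * norm (B x *v g x)" using A by simp
      also have "L * norm (h - e *\<^sub>R g x) \<le> L * (norm h + e * norm (g x))"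
        using L e norm_triangle_ineq4[of h "e *\<^sub>R g x"] by (simp add: mult_left_mono)
      finally show ?thesis by (simp add: algebra_simps K_def)
    qed
    have "norm (B x *v h) \<le> L * norm h + e" if e: "e > 0" for e
    proof -
      have "e / (K + 1) > 0" using e K by simp
      hence "norm (B x *v h) \<le> L * norm h + e / (K + 1) * K" by (rule P)
      moreover have "e / (K + 1) * K \<le> e" using e K by (simp add: field_simps)
      ultimately show ?thesis by linarith
    qed
    thus ?thesis by (rule field_le_epsilon)
  qed
qed

lemma outer_mv: "outer_prod a b *v z = (b \<bullet> z) *\<^sub>R (a::real^'n::finite)"
  by (simp add: outer_prod_def vec_eq_iff matrix_vector_mult_def inner_vec_def sum_distrib_left algebra_simps)

lemma H_mv: "H_mat s y *v z = z - (1 / (y \<bullet> s)) *\<^sub>R ((s \<bullet> z) *\<^sub>R y + (y \<bullet> z) *\<^sub>R s)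
     + (2 * (norm y)^2 / (y \<bullet> s)^2) *\<^sub>R ((s \<bullet> z) *\<^sub>R (s::real^'n::finite))"
  unfolding H_mat_def matrix_vector_mult_add_rdistrib matrix_vector_mult_diff_rdistrib
      scaleR_matrix_vector_assoc[symmetric] outer_mv matrix_vector_mul_lid
  by (simp add: inner_commute)

lemma H_pos:
  fixes s y z :: "real^'n::finite"
  shows "z \<bullet> (H_mat s y *v z) \<ge> (norm z)^2 / 2"
proof -
  define a where "a = (s \<bullet> z) / (y \<bullet> s)"
  have "z \<bullet> (H_mat s y *v z) = z \<bullet> z - (1 / (y \<bullet> s)) * ((s \<bullet> z) * (z \<bullet> y) + (y \<bullet> z) * (z \<bullet> s))
     + (2 * (norm y)^2 / (y \<bullet> s)^2) * ((s \<bullet> z) * (z \<bullet> s))"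
    unfolding H_mv inner_diff_right inner_add_right inner_scaleR_right by simp
  also have "\<dots> = (norm z)^2 - 2 * a * (y \<bullet> z) + 2 * (norm y)^2 * a^2"
  proof (cases "y \<bullet> s = 0")
    case True thus ?thesis by (simp add: a_def power2_norm_eq_inner)
  next
    case False
    have "z \<bullet> y = y \<bullet> z" "z \<bullet> s = s \<bullet> z" "z \<bullet> z = (norm z)^2"
      by (simp_all add: inner_commute power2_norm_eq_inner)
    thus ?thesis unfolding a_def using False by (simp add: power2_eq_square divide_simps)
  qed
  finally have E: "z \<bullet> (H_mat s y *v z) = (norm z)^2 - 2 * a * (y \<bullet> z) + 2 * (norm y)^2 * a^2" .
  have "a * (y \<bullet> z) \<le> \<bar>a\<bar> * (norm y * norm z)"
  proof -
    have "a * (y \<bullet> z) \<le> \<bar>a\<bar> * \<bar>y \<bullet> z\<bar>" by (metis abs_ge_self abs_mult)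
    also have "\<dots> \<le> \<bar>a\<bar> * (norm y * norm z)" by (intro mult_left_mono Cauchy_Schwarz_ineq2) auto
    finally show ?thesis .
  qed
  moreover have "0 \<le> 2 * (norm z / 2 - \<bar>a\<bar> * norm y)^2" by simp
  moreover have "(norm y)^2 * a^2 = (norm y)^2 * \<bar>a\<bar>^2" by simp
  moreover have "2 * (norm z / 2 - \<bar>a\<bar> * norm y)^2 = (norm z)^2/2 - 2 * (\<bar>a\<bar> * (norm y * norm z)) + 2 * (norm y)^2 * \<bar>a\<bar>^2"
    by (simp add: power2_eq_square algebra_simps)
  moreover have "2 * a * (y \<bullet> z) = 2 * (a * (y \<bullet> z))" by simp
  ultimately show ?thesis unfolding E by linarith
qed

lemma H_norm:
  fixes s y z :: "real^'n::finite"
  assumes th: "th > 0" and sy: "\<bar>s \<bullet> y\<bar> > th * (norm s)^2" and yL: "norm y \<le> L * norm s"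
    and L: "L \<ge> 0"
  shows "norm (H_mat s y *v z) \<le> (1 + 2 * L / th + 2 * L^2 / th^2) * norm z"
proof -
  have snz: "s \<noteq> 0" using sy by auto
  hence sp: "norm s > 0" by simp
  define q where "q = \<bar>y \<bullet> s\<bar>"
  have q: "q > th * (norm s)^2" using sy by (simp add: q_def inner_commute)
  have tsp: "th * (norm s)^2 > 0" using th sp by simp
  have qp: "q > 0" using q tsp by linarith
  have t1: "norm ((1 / (y \<bullet> s)) *\<^sub>R ((s \<bullet> z) *\<^sub>R y + (y \<bullet> z) *\<^sub>R s)) \<le> (2 * L / th) * norm z"
  proof -
    have "norm ((s \<bullet> z) *\<^sub>R y + (y \<bullet> z) *\<^sub>R s) \<le> \<bar>s \<bullet> z\<bar> * norm y + \<bar>y \<bullet> z\<bar> * norm s"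
      by (metis norm_scaleR norm_triangle_ineq real_norm_def)
    also have "\<dots> \<le> (norm s * norm z) * (L * norm s) + (norm y * norm z) * norm s"
      by (intro add_mono mult_mono Cauchy_Schwarz_ineq2 yL mult_right_mono) auto
    also have "(norm y * norm z) * norm s \<le> (L * norm s * norm z) * norm s"
      by (intro mult_right_mono yL) auto
    finally have A: "norm ((s \<bullet> z) *\<^sub>R y + (y \<bullet> z) *\<^sub>R s) \<le> 2 * L * (norm s)^2 * norm z"
      by (simp add: power2_eq_square algebra_simps)
    have "norm ((1 / (y \<bullet> s)) *\<^sub>R ((s \<bullet> z) *\<^sub>R y + (y \<bullet> z) *\<^sub>R s))
          = norm ((s \<bullet> z) *\<^sub>R y + (y \<bullet> z) *\<^sub>R s) / q" by (simp add: q_def)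
    also have "\<dots> \<le> 2 * L * (norm s)^2 * norm z / q" using A qp by (simp add: divide_right_mono)
    also have "\<dots> \<le> 2 * L * (norm s)^2 * norm z / (th * (norm s)^2)"
      using q tsp L by (intro divide_left_mono) auto
    also have "\<dots> = (2 * L / th) * norm z" using sp by simp
    finally show ?thesis .
  qed
  have t2: "norm ((2 * (norm y)^2 / (y \<bullet> s)^2) *\<^sub>R ((s \<bullet> z) *\<^sub>R s)) \<le> (2 * L^2 / th^2) * norm z"
  proof -
    have "norm ((2 * (norm y)^2 / (y \<bullet> s)^2) *\<^sub>R ((s \<bullet> z) *\<^sub>R s))
        = 2 * (norm y)^2 * (\<bar>s \<bullet> z\<bar> * norm s) / q^2" by (simp add: q_def abs_mult)
    also have "\<dots> \<le> 2 * (L * norm s)^2 * (norm s * norm z * norm s) / q^2"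
      by (intro divide_right_mono mult_mono mult_left_mono power_mono yL
          mult_right_mono Cauchy_Schwarz_ineq2) auto
    also have "\<dots> = 2 * L^2 * norm z * ((norm s)^2)^2 / q^2" by (simp add: power2_eq_square)
    also have "\<dots> \<le> 2 * L^2 * norm z * ((norm s)^2)^2 / (th * (norm s)^2)^2"
      using q tsp L qp by (intro divide_left_mono power_mono mult_pos_pos) auto
    also have "\<dots> = (2 * L^2 / th^2) * norm z" using sp th
      by (simp add: power_mult_distrib)
    finally show ?thesis .
  qed
  have "norm (H_mat s y *v z) \<le> norm z + norm ((1 / (y \<bullet> s)) *\<^sub>R ((s \<bullet> z) *\<^sub>R y + (y \<bullet> z) *\<^sub>R s))
      + norm ((2 * (norm y)^2 / (y \<bullet> s)^2) *\<^sub>R ((s \<bullet> z) *\<^sub>R s))"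
    unfolding H_mv by (meson norm_triangle_ineq norm_triangle_ineq4 add_mono order_trans order_refl)
  thus ?thesis using t1 t2 by (simp add: algebra_simps)
qed

lemma newton_dir:
  fixes A :: "real^'n::finite^'n" and v :: "real^'n"
  assumes Ab: "\<And>h. norm (A *v h) \<le> L * norm h"
    and pd: "\<And>z. z \<bullet> (A *v z) \<ge> m * (norm z)^2" and m: "m > 0" and L: "L > 0"
  shows "v \<bullet> (matrix_inv A *v (- v)) \<le> - (m / L^2) * (norm v)^2
     \<and> norm (matrix_inv A *v (- v)) \<le> norm v / m"
proof -
  have ker: "\<forall>z. A *v z = 0 \<longrightarrow> z = 0"
  proof (intro allI impI)
    fix z assume "A *v z = 0"
    hence "m * (norm z)^2 \<le> 0" using pd[of z] by simp
    thus "z = 0" using m by (simp add: mult_le_0_iff)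
  qed
  hence "invertible A" using matrix_left_invertible_ker invertible_left_inverse by blast
  hence "\<exists>A'. A ** A' = mat 1 \<and> A' ** A = mat 1" by (simp add: invertible_def)
  hence inv: "A ** matrix_inv A = mat 1" unfolding matrix_inv_def by (rule someI_ex[where P="\<lambda>A'. A ** A' = mat 1 \<and> A' ** A = mat 1", THEN conjunct1])
  define w where "w = matrix_inv A *v v"
  have Aw: "A *v w = v" by (simp add: w_def matrix_vector_mul_assoc inv)
  have d: "matrix_inv A *v (- v) = - w" by (simp add: w_def mv_neg)
  have vw: "v \<bullet> w \<ge> m * (norm w)^2" using pd[of w] Aw by (simp add: inner_commute)
  have nv: "norm v \<le> L * norm w" using Ab[of w] Aw by simp
  have "m * (norm w)^2 \<le> norm v * norm w" using vw Cauchy_Schwarz_ineq2[of v w] by linarith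
  hence nw: "norm w \<le> norm v / m"
    using m by (cases "norm w = 0") (auto simp: power2_eq_square field_simps)
  have "(norm v)^2 \<le> L^2 * (norm w)^2"
    using nv by (metis norm_ge_zero power_mono power_mult_distrib)
  hence "(norm v)^2 / L^2 \<le> (norm w)^2" using L by (simp add: field_simps)
  hence "m * ((norm v)^2 / L^2) \<le> m * (norm w)^2" using m by (intro mult_left_mono) auto
  moreover have "m * ((norm v)^2 / L^2) = (m / L^2) * (norm v)^2" by simp
  ultimately have "v \<bullet> w \<ge> (m / L^2) * (norm v)^2" using vw by linarith
  thus ?thesis using d nw by simp
qed

lemma seg_derivs:
  fixes f :: "real^'n::finite \<Rightarrow> real" and g :: "real^'n \<Rightarrow> real^'n" and B :: "real^'n \<Rightarrow> real^'n^'n"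
  assumes grad: "\<And>x. (f has_derivative (\<lambda>h. g x \<bullet> h)) (at x)"
    and hess: "\<And>x. (g has_derivative (\<lambda>h. B x *v h)) (at x)"
  shows "DERIV (\<lambda>t. f (x + t *\<^sub>R s)) t :> g (x + t *\<^sub>R s) \<bullet> s"
    and "DERIV (\<lambda>t. g (x + t *\<^sub>R s) \<bullet> s) t :> s \<bullet> (B (x + t *\<^sub>R s) *v s)"
proof -
  have p: "((\<lambda>t. x + t *\<^sub>R s) has_derivative (\<lambda>h. h *\<^sub>R s)) (at t)"
    by (intro derivative_eq_intros) auto
  have "((\<lambda>t. f (x + t *\<^sub>R s)) has_derivative (\<lambda>h. g (x + t *\<^sub>R s) \<bullet> (h *\<^sub>R s))) (at t)"
    using has_derivative_compose[OF p grad] .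
  moreover have "(\<lambda>h. g (x + t *\<^sub>R s) \<bullet> (h *\<^sub>R s)) = (*) (g (x + t *\<^sub>R s) \<bullet> s)"
    by (auto simp: fun_eq_iff)
  ultimately show "DERIV (\<lambda>t. f (x + t *\<^sub>R s)) t :> g (x + t *\<^sub>R s) \<bullet> s"
    by (simp add: has_field_derivative_def)
  have "((\<lambda>t. g (x + t *\<^sub>R s)) has_derivative (\<lambda>h. B (x + t *\<^sub>R s) *v (h *\<^sub>R s))) (at t)"
    using has_derivative_compose[OF p hess] .
  hence "((\<lambda>t. g (x + t *\<^sub>R s) \<bullet> s) has_derivative (\<lambda>h. (B (x + t *\<^sub>R s) *v (h *\<^sub>R s)) \<bullet> s)) (at t)"
    by (rule has_derivative_inner_left)
  moreover have "(\<lambda>h. (B (x + t *\<^sub>R s) *v (h *\<^sub>R s)) \<bullet> s) = (*) (s \<bullet> (B (x + t *\<^sub>R s) *v s))"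
    by (auto simp: fun_eq_iff matrix_vector_mult_scaleR inner_commute)
  ultimately show "DERIV (\<lambda>t. g (x + t *\<^sub>R s) \<bullet> s) t :> s \<bullet> (B (x + t *\<^sub>R s) *v s)"
    by (simp add: has_field_derivative_def)
qed

lemma taylor_up:
  fixes f :: "real^'n::finite \<Rightarrow> real" and g :: "real^'n \<Rightarrow> real^'n" and B :: "real^'n \<Rightarrow> real^'n^'n"
  assumes grad: "\<And>x. (f has_derivative (\<lambda>h. g x \<bullet> h)) (at x)"
    and hess: "\<And>x. (g has_derivative (\<lambda>h. B x *v h)) (at x)"
    and hb: "\<And>z. f z \<le> c0 \<Longrightarrow> s \<bullet> (B z *v s) \<le> K \<and> s \<bullet> (B z *v s) \<ge> 0"
    and t: "t > 0" and seg: "\<And>u. 0 \<le> u \<Longrightarrow> u < t \<Longrightarrow> f (x + u *\<^sub>R s) \<le> c0"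
  shows "f (x + t *\<^sub>R s) - f x \<le> t * (g x \<bullet> s + t * K)
     \<and> f (x + t *\<^sub>R s) - f x \<ge> t * (g x \<bullet> s)"
proof -
  note D = seg_derivs[OF grad hess, of x s]
  obtain z where z: "0 < z" "z < t" and Ez: "f (x + t *\<^sub>R s) - f (x + 0 *\<^sub>R s) = (t - 0) * (g (x + z *\<^sub>R s) \<bullet> s)"
    using MVT2[of 0 t "\<lambda>t. f (x + t *\<^sub>R s)" "\<lambda>t. g (x + t *\<^sub>R s) \<bullet> s"] t D(1) by blast
  obtain w where w: "0 < w" "w < z" and Ew: "g (x + z *\<^sub>R s) \<bullet> s - g (x + 0 *\<^sub>R s) \<bullet> s = (z - 0) * (s \<bullet> (B (x + w *\<^sub>R s) *v s))"
    using MVT2[of 0 z "\<lambda>t. g (x + t *\<^sub>R s) \<bullet> s" "\<lambda>t. s \<bullet> (B (x + t *\<^sub>R s) *v s)"] z D(2) by blast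
  have "f (x + w *\<^sub>R s) \<le> c0" using seg[of w] w z by simp
  from hb[OF this] have hw: "s \<bullet> (B (x + w *\<^sub>R s) *v s) \<le> K" "s \<bullet> (B (x + w *\<^sub>R s) *v s) \<ge> 0" by auto
  have "z * (s \<bullet> (B (x + w *\<^sub>R s) *v s)) \<le> t * K"
  proof -
    have "z * (s \<bullet> (B (x + w *\<^sub>R s) *v s)) \<le> z * K" using hw z by (intro mult_left_mono) auto
    also have "z * K \<le> t * K" using z hw by (intro mult_right_mono) auto
    finally show ?thesis .
  qed
  moreover have "z * (s \<bullet> (B (x + w *\<^sub>R s) *v s)) \<ge> 0" using hw z by simp
  ultimately have gz: "g x \<bullet> s \<le> g (x + z *\<^sub>R s) \<bullet> s" "g (x + z *\<^sub>R s) \<bullet> s \<le> g x \<bullet> s + t * K"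
    using Ew by auto
  have "f (x + t *\<^sub>R s) - f x = t * (g (x + z *\<^sub>R s) \<bullet> s)" using Ez by simp
  thus ?thesis using gz t by (simp add: mult_left_mono)
qed

lemma seg_lemma:
  fixes f :: "real^'n::finite \<Rightarrow> real" and g :: "real^'n \<Rightarrow> real^'n" and B :: "real^'n \<Rightarrow> real^'n^'n"
  assumes grad: "\<And>x. (f has_derivative (\<lambda>h. g x \<bullet> h)) (at x)"
    and hess: "\<And>x. (g has_derivative (\<lambda>h. B x *v h)) (at x)"
    and hb: "\<And>z. f z \<le> c0 \<Longrightarrow> s \<bullet> (B z *v s) \<le> K \<and> s \<bullet> (B z *v s) \<ge> 0"
    and fx: "f x \<le> c0" and small: "K < - (g x \<bullet> s)"
  shows "f (x + s) - f x \<le> g x \<bullet> s + K \<and> f (x + s) - f x \<ge> g x \<bullet> s"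
proof -
  define \<phi> where "\<phi> t = f (x + t *\<^sub>R s)" for t
  note D = seg_derivs[OF grad hess, of x s]
  have K0: "K \<ge> 0" using hb[OF fx] by auto
  have gs: "g x \<bullet> s < 0" using small K0 by linarith
  have cont: "continuous_on UNIV \<phi>"
    unfolding \<phi>_def by (intro continuous_at_imp_continuous_on ballI) (rule DERIV_isCont[OF D(1)])
  obtain d where d: "d > 0" and dd: "\<And>h. h > 0 \<Longrightarrow> h < d \<Longrightarrow> \<phi> 0 > \<phi> (0 + h)"
    using DERIV_neg_dec_right[OF D(1)[of 0]] gs unfolding \<phi>_def by auto
  have below: "\<phi> t < \<phi> 0" if t: "0 < t" "t \<le> 1" for t
  proof (rule ccontr)
    assume "\<not> \<phi> t < \<phi> 0"
    hence t1: "\<phi> 0 \<le> \<phi> t" by simp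
    have td: "t \<ge> d" using dd[of t] t t1 by force
    define T where "T = {u. d / 2 \<le> u} \<inter> {u. u \<le> t} \<inter> {u. \<phi> 0 \<le> \<phi> u}"
    have cT: "closed T" unfolding T_def
      by (intro closed_Int closed_Collect_le cont continuous_on_const continuous_on_id)
    have tT: "t \<in> T" using td d t1 by (simp add: T_def)
    have bT: "bdd_below T" unfolding T_def by (rule bdd_belowI[of _ "d/2"]) auto
    define ts where "ts = Inf T"
    have tsT: "ts \<in> T" unfolding ts_def using closed_contains_Inf[OF _ bT cT] tT by blast
    hence ts: "d / 2 \<le> ts" "ts \<le> t" "\<phi> 0 \<le> \<phi> ts" by (auto simp: T_def)
    have tspos: "ts > 0" using ts d by linarith
    have lt: "\<phi> u < \<phi> 0" if u: "0 < u" "u < ts" for u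
    proof (cases "u < d")
      case True thus ?thesis using dd[of u] u by simp
    next
      case False
      have "u \<notin> T"
      proof
        assume "u \<in> T" hence "ts \<le> u" unfolding ts_def using bT by (rule cInf_lower)
        thus False using u by simp
      qed
      thus ?thesis using False u ts d by (auto simp: T_def)
    qed
    have seg: "f (x + u *\<^sub>R s) \<le> c0" if "0 \<le> u" "u < ts" for u
    proof (cases "u = 0")
      case True thus ?thesis using fx by simp
    next
      case False thus ?thesis using lt[of u] that fx by (simp add: \<phi>_def)
    qed
    have "f (x + ts *\<^sub>R s) - f x \<le> ts * (g x \<bullet> s + ts * K)"
      using taylor_up[OF grad hess hb tspos seg] by blast
    moreover have "ts * K \<le> 1 * K" using ts t K0 by (intro mult_right_mono) auto
    hence "g x \<bullet> s + ts * K < 0" using small by linarith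
    hence "ts * (g x \<bullet> s + ts * K) < 0" using tspos by (simp add: mult_pos_neg)
    ultimately have "\<phi> ts < \<phi> 0" by (simp add: \<phi>_def)
    thus False using ts by simp
  qed
  have seg: "f (x + u *\<^sub>R s) \<le> c0" if "0 \<le> u" "u < 1" for u
  proof (cases "u = 0")
    case True thus ?thesis using fx by simp
  next
    case False thus ?thesis using below[of u] that fx by (simp add: \<phi>_def)
  qed
  have "(0::real) < 1" by simp
  from taylor_up[OF grad hess hb this seg] show ?thesis by simp
qed

lemma rho_bound:
  fixes f :: "real^'n::finite \<Rightarrow> real" and g :: "real^'n \<Rightarrow> real^'n" and B :: "real^'n \<Rightarrow> real^'n^'n"
  assumes grad: "\<And>x. (f has_derivative (\<lambda>h. g x \<bullet> h)) (at x)"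
    and hess: "\<And>x. (g has_derivative (\<lambda>h. B x *v h)) (at x)"
    and hb: "\<And>z v. f z \<le> c0 \<Longrightarrow> M * (norm v)^2 \<ge> v \<bullet> (B z *v v) \<and> v \<bullet> (B z *v v) \<ge> m * (norm v)^2"
    and m: "m > 0" and M: "M > 0" and c: "c > 0" and C: "C > 0"
    and fx: "f x \<le> c0" and gd: "g x \<bullet> d \<le> - c * (norm (g x))^2" and nd: "norm d \<le> C * norm (g x)"
    and gnz: "g x \<noteq> 0"
    and dt: "0 < dt" "dt \<le> 1" "dt \<le> c / (4 * M * C^2)"
  shows "\<bar>1 - (f x - f (x + (dt / (1 + dt)) *\<^sub>R d)) /
            (- ((1 + dt / 2) / (1 + dt)) * (g x \<bullet> ((dt / (1 + dt)) *\<^sub>R d)))\<bar> < 3/4"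
proof -
  define \<tau> where "\<tau> = dt / (1 + dt)"
  define s where "s = \<tau> *\<^sub>R d"
  define G where "G = (norm (g x))^2"
  define a where "a = - (g x \<bullet> s)"
  define K where "K = M * (norm s)^2"
  define E where "E = f (x + s) - f x + a"
  define \<kappa> where "\<kappa> = (1 + dt / 2) / (1 + dt)"
  have G: "G > 0" using gnz by (simp add: G_def)
  have tau: "0 < \<tau>" "\<tau> \<le> dt" using dt by (auto simp: \<tau>_def field_simps)
  have a1: "a \<ge> \<tau> * (c * G)"
  proof -
    have "\<tau> * (c * G) \<le> \<tau> * (- (g x \<bullet> d))" using gd tau by (intro mult_left_mono) (auto simp: G_def)
    thus ?thesis by (simp add: a_def s_def)
  qed
  have "\<tau> * (c * G) > 0" using tau c G by simp
  hence a: "a > 0" using a1 by linarith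
  have nd2: "(norm d)^2 \<le> C^2 * G" using nd by (metis G_def norm_ge_zero power_mono power_mult_distrib)
  have K1: "K \<le> \<tau> * (\<tau> * (M * C^2 * G))"
  proof -
    have "K = M * \<tau>^2 * (norm d)^2" using tau by (simp add: K_def s_def power_mult_distrib)
    also have "\<dots> \<le> M * \<tau>^2 * (C^2 * G)" using nd2 M by (intro mult_left_mono) auto
    finally show ?thesis by (simp add: power2_eq_square algebra_simps)
  qed
  have tM: "\<tau> * (M * C^2) \<le> c / 4"
  proof -
    have "\<tau> * (M * C^2) \<le> dt * (M * C^2)" using tau M by (intro mult_right_mono) auto
    also have "\<dots> \<le> c / (4 * M * C^2) * (M * C^2)" using dt M by (intro mult_right_mono) auto
    also have "\<dots> = c / 4" using M C by simp
    finally show ?thesis .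
  qed
  have "\<tau> * (M * C^2 * G) \<le> c / 4 * G" using tM G by (simp add: mult.assoc[symmetric] mult_right_mono)
  hence "\<tau> * (\<tau> * (M * C^2 * G)) \<le> \<tau> * (c / 4 * G)" using tau by (intro mult_left_mono) auto
  hence K2: "K \<le> a / 4" using K1 a1 by (simp add: algebra_simps)
  have hbs: "s \<bullet> (B z *v s) \<le> K \<and> s \<bullet> (B z *v s) \<ge> 0" if "f z \<le> c0" for z
  proof -
    have "m * (norm s)^2 \<ge> 0" using m by simp
    thus ?thesis using hb[OF that, of s] unfolding K_def by linarith
  qed
  have "K < - (g x \<bullet> s)" using K2 a by (simp add: a_def)
  from seg_lemma[OF grad hess hbs fx this]
  have E: "0 \<le> E" "E \<le> K" by (auto simp: E_def a_def)
  define r where "r = (a - E) / a"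
  have r: "3/4 \<le> r" "r \<le> 1" using E K2 a by (auto simp: r_def field_simps)
  have kap: "1 \<le> 1 / \<kappa>" "1 / \<kappa> \<le> 4/3" using dt by (auto simp: \<kappa>_def field_simps)
  have kp: "\<kappa> > 0" using dt by (simp add: \<kappa>_def)
  have "(f x - f (x + s)) / (- \<kappa> * (g x \<bullet> s)) = (a - E) / (\<kappa> * a)"
    by (simp add: E_def a_def)
  also have "\<dots> = r * (1 / \<kappa>)" using a kp by (simp add: r_def)
  finally have eq: "(f x - f (x + s)) / (- \<kappa> * (g x \<bullet> s)) = r * (1 / \<kappa>)" .
  have "r * 1 \<le> r * (1 / \<kappa>)" using r kap by (intro mult_left_mono) auto
  moreover have "r * (1 / \<kappa>) \<le> 1 * (4/3)" using r kap kp by (intro mult_mono) auto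
  moreover have "\<And>q::real. r * 1 \<le> q \<Longrightarrow> q \<le> 1 * (4/3) \<Longrightarrow> \<bar>1 - q\<bar> < 3/4"
    using r by (simp only: abs_less_iff) linarith
  ultimately have "\<bar>1 - r * (1 / \<kappa>)\<bar> < 3/4" by blast
  thus ?thesis using eq unfolding s_def \<tau>_def \<kappa>_def by simp
qed

theorem lemma3:
  fixes f :: "real^'n \<Rightarrow> real"
    and g :: "real^'n \<Rightarrow> real^'n"
    and B :: "real^'n \<Rightarrow> real^'n^'n"
    and x0 :: "real^'n"
    and L_C m M \<epsilon> :: real
  assumes grad: "\<And>x. (f has_derivative (\<lambda>h. g x \<bullet> h)) (at x)"
    and hess: "\<And>x. (g has_derivative (\<lambda>h. B x *v h)) (at x)"
    and hess_cont: "continuous_on UNIV B"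
    and lip: "\<And>x y. x \<in> {x. f x \<le> f x0} \<Longrightarrow> y \<in> {x. f x \<le> f x0} \<Longrightarrow>
                 norm (g x - g y) \<le> L_C * norm (x - y)"
    and mpos: "0 < m" and mM: "m \<le> M"
    and hess_bnd: "\<And>x z. x \<in> {x. f x \<le> f x0} \<Longrightarrow>
                 M * (norm z)^2 \<ge> z \<bullet> (B x *v z) \<and> z \<bullet> (B x *v z) \<ge> m * (norm z)^2"
    and eps: "0 < \<epsilon>"
    and nostop: "\<And>k. norm (g (xk (ept_seq f g B x0 k))) > \<epsilon>"
  shows "\<exists>\<delta>>0. \<forall>k\<ge>1. dtk (ept_seq f g B x0 k) \<ge> gamma_2 * \<delta>"
proof -
  define L where "L = max L_C 1"
  have L: "L > 0" "L \<ge> L_C" by (auto simp: L_def)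
  define th where "th = theta_par"
  have th: "th > 0" by (simp add: th_def theta_par_def)
  define c where "c = min (m / L^2) (1/2)"
  define C where "C = max (1 / m) (1 + 2 * L / th + 2 * L^2 / th^2)"
  have c: "c > 0" using mpos L by (simp add: c_def)
  have C: "C > 0" using mpos by (simp add: C_def less_max_iff_disj)
  have M: "M > 0" using mpos mM by simp
  define \<delta> where "\<delta> = min 1 (c / (4 * M * C^2))"
  have dpos: "\<delta> > 0" using c C M by (simp add: \<delta>_def)
  define \<delta>' where "\<delta>' = min dt_init \<delta>"
  have dpos': "\<delta>' > 0" using dpos by (simp add: \<delta>'_def dt_init_def)
  have lipL: "norm (g y - g x) \<le> L * norm (y - x)" if "f x \<le> f x0" "f y \<le> f x0" for x y
  proof -
    have "norm (g y - g x) \<le> L_C * norm (y - x)" using lip[of y x] that by simp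
    also have "\<dots> \<le> L * norm (y - x)" using L by (intro mult_right_mono) auto
    finally show ?thesis .
  qed
  define good where "good x d \<longleftrightarrow> g x \<bullet> d \<le> - c * (norm (g x))^2 \<and> norm d \<le> C * norm (g x)" for x d
  define Inv where "Inv st \<longleftrightarrow> f (xk st) \<le> f x0 \<and> dtk st > 0 \<and> norm (ypair st) \<le> L * norm (spair st)
      \<and> (\<not> prev_acc st \<longrightarrow> good (xk st) (sdir st))" for st :: "'n ept_state"
  have newgood: "good (xk st) (new_dir g B st)"
    if fx: "f (xk st) \<le> f x0" and gnz: "g (xk st) \<noteq> 0" and yL: "norm (ypair st) \<le> L * norm (spair st)"
    for st :: "'n ept_state"
  proof (cases "\<bar>spair st \<bullet> ypair st\<bar> > theta_par * (norm (spair st))^2 \<and> kbad st < 5")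
    case True
    hence nd: "new_dir g B st = - (H_mat (spair st) (ypair st) *v g (xk st))" by (simp add: new_dir_def)
    have sy: "\<bar>spair st \<bullet> ypair st\<bar> > th * (norm (spair st))^2" using True by (simp add: th_def)
    have n1: "norm (H_mat (spair st) (ypair st) *v g (xk st)) \<le> (1 + 2 * L / th + 2 * L^2 / th^2) * norm (g (xk st))"
      by (rule H_norm[OF th sy yL]) (use L in simp)
    also have "\<dots> \<le> C * norm (g (xk st))" by (intro mult_right_mono) (auto simp: C_def)
    finally have n2: "norm (new_dir g B st) \<le> C * norm (g (xk st))" by (simp add: nd)
    have "g (xk st) \<bullet> (H_mat (spair st) (ypair st) *v g (xk st)) \<ge> (norm (g (xk st)))^2 / 2" by (rule H_pos)
    moreover have "c \<le> 1/2" unfolding c_def by (rule min.cobounded2)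
    hence "c * (norm (g (xk st)))^2 \<le> 1/2 * (norm (g (xk st)))^2"
      by (intro mult_right_mono) auto
    ultimately have "g (xk st) \<bullet> new_dir g B st \<le> - c * (norm (g (xk st)))^2" by (simp add: nd)
    thus ?thesis using n2 by (simp add: good_def)
  next
    case False
    have nd: "new_dir g B st = matrix_inv (B (xk st)) *v (- g (xk st))"
      unfolding new_dir_def using False by (rule if_not_P)
    have Ab: "norm (B (xk st) *v h) \<le> L * norm h" for h
      by (rule dir_bound[OF grad hess _ fx gnz]) (use lipL fx L in auto)
    have pd: "z \<bullet> (B (xk st) *v z) \<ge> m * (norm z)^2" for z using hess_bnd[of "xk st" z] fx by simp
    from newton_dir[OF Ab pd mpos L(1), of "g (xk st)"]
    have N: "g (xk st) \<bullet> new_dir g B st \<le> - (m / L^2) * (norm (g (xk st)))^2"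
        "norm (new_dir g B st) \<le> norm (g (xk st)) / m" by (auto simp: nd)
    have "c \<le> m / L^2" unfolding c_def by (rule min.cobounded1)
    hence "c * (norm (g (xk st)))^2 \<le> (m / L^2) * (norm (g (xk st)))^2"
      by (intro mult_right_mono) auto
    moreover have "norm (g (xk st)) / m \<le> C * norm (g (xk st))"
    proof -
      have "1 / m \<le> C" unfolding C_def by (rule max.cobounded1)
      hence "(1 / m) * norm (g (xk st)) \<le> C * norm (g (xk st))" by (intro mult_right_mono) auto
      thus ?thesis by simp
    qed
    ultimately show ?thesis using N by (simp add: good_def)
  qed
  have step: "Inv (ept_step f g B st) \<and> dtk (ept_step f g B st) \<ge> gamma_2 * dtk st
      \<and> (dtk st \<le> \<delta> \<longrightarrow> dtk (ept_step f g B st) \<ge> dtk st)"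
    if I: "Inv st" and gnz: "g (xk st) \<noteq> 0" for st
  proof -
    define x where "x = xk st"
    define dt where "dt = dtk st"
    define d where "d = (if prev_acc st then new_dir g B st else sdir st)"
    define s where "s = (dt / (1 + dt)) *\<^sub>R d"
    define mdec where "mdec = - ((1 + dt / 2) / (1 + dt)) * (g x \<bullet> s)"
    define rho where "rho = (f x - f (x + s)) / mdec"
    have fx: "f x \<le> f x0" and dtp: "dt > 0" and yL: "norm (ypair st) \<le> L * norm (spair st)"
      using I by (auto simp: Inv_def x_def dt_def)
    have gx: "g x \<noteq> 0" using gnz by (simp add: x_def)
    have gd: "good x d" using I newgood[OF _ gnz yL] fx by (auto simp: d_def Inv_def x_def)
    have F: "xk (ept_step f g B st) = (if rho > eta_a then x + s else x)"
      "dtk (ept_step f g B st) = (if \<bar>1 - rho\<bar> \<ge> eta_2 then gamma_2 * dt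
                else if \<bar>1 - rho\<bar> \<ge> eta_1 then dt else gamma_1 * dt)"
      "spair (ept_step f g B st) = (if rho > eta_a then (x + s) - x else spair st)"
      "ypair (ept_step f g B st) = (if rho > eta_a then g (x + s) - g x else ypair st)"
      "prev_acc (ept_step f g B st) = (rho > eta_a)"
      "sdir (ept_step f g B st) = d"
      unfolding ept_step_def Let_def x_def dt_def d_def s_def mdec_def rho_def by simp_all
    have "g x \<bullet> d < 0"
    proof -
      have "0 < c * (norm (g x))^2" using c gx by simp
      thus ?thesis using gd by (simp add: good_def)
    qed
    hence mp: "mdec > 0"
    proof -
      assume gd0: "g x \<bullet> d < 0"
      have k0: "(1 + dt / 2) / (1 + dt) > 0" "dt / (1 + dt) > 0" using dtp by auto
      have "mdec = ((1 + dt / 2) / (1 + dt)) * ((dt / (1 + dt)) * (- (g x \<bullet> d)))"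
        by (simp add: mdec_def s_def)
      moreover have "((1 + dt / 2) / (1 + dt)) * ((dt / (1 + dt)) * (- (g x \<bullet> d))) > 0"
        using gd0 by (intro mult_pos_pos k0) simp
      ultimately show ?thesis by simp
    qed
    have dec: "f (x + s) \<le> f x0" if "rho > eta_a"
    proof -
      have "rho > 0" using that by (simp add: eta_a_def)
      hence "f x - f (x + s) > 0" using mp by (simp add: rho_def zero_less_divide_iff)
      thus ?thesis using fx by simp
    qed
    have xn: "f (xk (ept_step f g B st)) \<le> f x0" using F(1) dec fx by auto
    have dtn: "dtk (ept_step f g B st) \<ge> gamma_2 * dt" using F(2) dtp
      by (auto simp: gamma_2_def gamma_1_def)
    have dtn0: "dtk (ept_step f g B st) > 0" using F(2) dtp
      by (auto simp: gamma_2_def gamma_1_def)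
    have yn: "norm (ypair (ept_step f g B st)) \<le> L * norm (spair (ept_step f g B st))"
      using F(3,4) yL lipL[OF fx dec] by auto
    have gn: "\<not> prev_acc (ept_step f g B st) \<longrightarrow> good (xk (ept_step f g B st)) (sdir (ept_step f g B st))"
      using F(1,5,6) gd by auto
    have small: "dtk (ept_step f g B st) \<ge> dt" if "dt \<le> \<delta>"
    proof -
      have "\<bar>1 - rho\<bar> < 3/4"
        unfolding rho_def mdec_def s_def
      proof (rule rho_bound[OF grad hess _ mpos M c C fx _ _ gx dtp])
        show "\<And>z v. f z \<le> f x0 \<Longrightarrow> M * (norm v)^2 \<ge> v \<bullet> (B z *v v) \<and> v \<bullet> (B z *v v) \<ge> m * (norm v)^2"
          using hess_bnd by simp
        show "g x \<bullet> d \<le> - c * (norm (g x))^2" "norm d \<le> C * norm (g x)" using gd by (auto simp: good_def)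
        show "dt \<le> 1" "dt \<le> c / (4 * M * C^2)" using that by (auto simp: \<delta>_def)
      qed
      thus ?thesis using F(2) dtp by (auto simp: eta_2_def eta_1_def gamma_1_def)
    qed
    show ?thesis using xn dtn dtn0 yn gn small by (auto simp: Inv_def dt_def)
  qed
  have main: "Inv (ept_seq f g B x0 k) \<and> dtk (ept_seq f g B x0 k) \<ge> gamma_2 * \<delta>'" for k
  proof (induction k)
    case 0
    have "Inv (ept_init x0)" by (simp add: Inv_def ept_init_def dt_init_def)
    moreover have "gamma_2 * \<delta>' \<le> dt_init" using dpos'
      by (simp add: gamma_2_def \<delta>'_def dt_init_def)
    ultimately show ?case by (simp add: ept_seq_def ept_init_def)
  next
    case (Suc k)
    define st where "st = ept_seq f g B x0 k"
    have sq: "ept_seq f g B x0 (Suc k) = ept_step f g B st" by (simp add: st_def ept_seq_def)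
    have I: "Inv st" and dk: "dtk st \<ge> gamma_2 * \<delta>'" using Suc by (auto simp: st_def)
    have gnz: "g (xk st) \<noteq> 0" using nostop[of k] eps by (auto simp: st_def)
    note S = step[OF I gnz]
    have "dtk (ept_step f g B st) \<ge> gamma_2 * \<delta>'"
    proof (cases "dtk st \<le> \<delta>")
      case True thus ?thesis using S dk by auto
    next
      case False
      hence "gamma_2 * \<delta>' \<le> gamma_2 * dtk st" by (simp add: gamma_2_def \<delta>'_def)
      thus ?thesis using S by auto
    qed
    thus ?case using S sq by simp
  qed
  show ?thesis using dpos' main by blast
qed

end
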